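(* Let $F_1,\dots,F_J\in\mathbb{Z}^2$ ($J\ge2$) be the vertices of a convex polygonal curve in the following sense: the interiors of the segments $\overline{F_iF_{i+1}}$ are mutually disjoint, and writing $\overrightarrow{F_iF_{i+1}}=L_i(\cos\beta_i,\sin\beta_i)$ for $i=1,\dots,J-1$, we have $L_i>0$ and $\beta_{i+1}>\beta_i$. Suppose $\beta_{J-1}-\beta_1\le2\pi$ and set $L=\sum_{i=1}^{J-1}L_i$. Then $$J\le2+(\beta_{J-1}-\beta_1)^{1/3}L^{2/3}.$$ *)

theory Defs
  imports "HOL-Analysis.Analysis"
begin

definition lattice_pt :: "int \<times> int \<Rightarrow> real \<times> real" where
  "lattice_pt p = (real_of_int (fst p), real_of_int (snd p))"

end

theory Submission
  imports Defs
begin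

lemma tang: fixes a b c :: real assumes "a>0" "b>0" "c>0"
  shows "3/c^2 - (a+b)/c^3 \<le> 1/(a*b)"
proof -
  define s where "s = (a+b)/2"
  have s: "s > 0" using assms s_def by simp
  have ab: "a*b \<le> s^2" unfolding s_def using sum_squares_ge_zero[of "a-b" 0]
    by (simp add: power2_eq_square field_simps) 
  have key: "c^3 + a*b*(2* s - 3*c) \<ge> 0"
  proof (cases "2* s \<ge> 3*c")
    case True thus ?thesis using assms by (simp add: mult_nonneg_nonneg)
  next
    case False
    have "a*b*(2* s-3*c) \<ge> s^2*(2* s-3*c)" using ab False by (intro mult_right_mono_neg) auto
    moreover have "c^3 + s^2*(2* s-3*c) = (c-s)^2*(c+2* s)" by (simp add: power2_eq_square power3_eq_cube algebra_simps)
    moreover have "(c-s)^2*(c+2* s) \<ge> 0" using s assms by simp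
    ultimately show ?thesis by linarith
  qed
  have "3/c^2 - (a+b)/c^3 = (3*c - (a+b))/c^3" using assms by (simp add: field_simps power2_eq_square power3_eq_cube)
  also have "\<dots> \<le> 1/(a*b)" using assms key unfolding s_def
    by (simp add: divide_simps algebra_simps power3_eq_cube) 
  finally show ?thesis .
qed
lemma L_ge1:
  fixes p :: "int \<times> int" and l b :: real
  assumes "lattice_pt p = l *\<^sub>R (cos b, sin b)" "l > 0"
  shows "l \<ge> 1"
proof -
  have e1: "real_of_int (fst p) = l * cos b" and e2: "real_of_int (snd p) = l * sin b"
    using assms(1) by (auto simp: lattice_pt_def)
  have "real_of_int (fst p)^2 + real_of_int (snd p)^2 = l^2"
    unfolding e1 e2 by (simp add: power_mult_distrib flip: distrib_left)
  hence eq: "real_of_int ((fst p)^2 + (snd p)^2) = l^2" by simp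
  have "(fst p)^2 + (snd p)^2 \<noteq> 0"
  proof
    assume "(fst p)^2 + (snd p)^2 = 0"
    hence "l^2 = 0" using eq by simp
    thus False using assms(2) by simp
  qed
  hence "(fst p)^2 + (snd p)^2 \<ge> 1"
    by (smt (verit) sum_squares_ge_zero zero_le_power2)
  hence "l^2 \<ge> 1" using eq by (metis of_int_le_iff of_int_1)
  thus ?thesis using assms(2) power2_le_imp_le[of 1 l] by simp
qed

lemma turn_bound:
  fixes p q :: "int \<times> int" and l1 l2 a b :: real
  assumes "lattice_pt p = l1 *\<^sub>R (cos a, sin a)" "l1 > 0"
    and "lattice_pt q = l2 *\<^sub>R (cos b, sin b)" "l2 > 0" and "a < b"
  shows "b - a \<ge> 1/(l1*l2)"
proof (cases "b - a \<ge> 1")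
  case True
  have "l1 \<ge> 1" "l2 \<ge> 1" using L_ge1 assms by blast+
  hence "l1*l2 \<ge> 1" by (metis mult_mono' mult_1 zero_le_one)
  hence "1/(l1*l2) \<le> 1" by simp
  thus ?thesis using True by linarith
next
  case False
  have sp: "sin (b - a) > 0" using False assms(5) pi_gt3 by (intro sin_gt_zero) auto
  have e1: "real_of_int (fst p) = l1 * cos a" and e2: "real_of_int (snd p) = l1 * sin a"
    using assms(1) by (auto simp: lattice_pt_def)
  have e3: "real_of_int (fst q) = l2 * cos b" and e4: "real_of_int (snd q) = l2 * sin b"
    using assms(3) by (auto simp: lattice_pt_def)
  define k where "k = fst p * snd q - snd p * fst q"
  have "real_of_int k = l1*l2* sin (b - a)"
    unfolding k_def of_int_diff of_int_mult e1 e2 e3 e4 sin_diff by (simp add: algebra_simps)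
  moreover have "l1*l2* sin (b-a) > 0" using sp assms by simp
  ultimately have "k \<ge> 1" by linarith
  hence "1 \<le> l1*l2* sin (b - a)" using \<open>real_of_int k = _\<close> by (metis of_int_le_iff of_int_1)
  also have "\<dots> \<le> l1*l2*(b-a)" using sin_x_le_x[of "b-a"] assms by (intro mult_left_mono) auto
  finally show ?thesis using assms by (simp add: field_simps)
qed

lemma beta_mono:
  fixes \<beta> :: "nat \<Rightarrow> real"
  assumes "\<And>i. \<lbrakk>1 \<le> i; Suc i < J\<rbrakk> \<Longrightarrow> \<beta> (Suc i) > \<beta> i"
  shows "1 \<le> i \<Longrightarrow> i \<le> j \<Longrightarrow> j < J \<Longrightarrow> \<beta> i \<le> \<beta> j"
proof (induction j)
  case 0 thus ?case by simp
next
  case (Suc j)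
  show ?case
  proof (cases "i = Suc j")
    case True thus ?thesis by simp
  next
    case False
    hence "\<beta> i \<le> \<beta> j" using Suc by simp
    moreover have "\<beta> j < \<beta> (Suc j)" using Suc False assms by simp
    ultimately show ?thesis by simp
  qed
qed

theorem lemma7p1:
  fixes F :: "nat \<Rightarrow> int \<times> int" and L \<beta> :: "nat \<Rightarrow> real" and J :: nat
  assumes "J \<ge> 2"
    and "\<And>i j. \<lbrakk>1 \<le> i; i < J; 1 \<le> j; j < J; i \<noteq> j\<rbrakk> \<Longrightarrow>
           open_segment (lattice_pt (F i)) (lattice_pt (F (Suc i)))
         \<inter> open_segment (lattice_pt (F j)) (lattice_pt (F (Suc j))) = {}"
    and "\<And>i. \<lbrakk>1 \<le> i; i < J\<rbrakk> \<Longrightarrow>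
           lattice_pt (F (Suc i)) - lattice_pt (F i) = L i *\<^sub>R (cos (\<beta> i), sin (\<beta> i))"
    and "\<And>i. \<lbrakk>1 \<le> i; i < J\<rbrakk> \<Longrightarrow> L i > 0"
    and "\<And>i. \<lbrakk>1 \<le> i; Suc i < J\<rbrakk> \<Longrightarrow> \<beta> (Suc i) > \<beta> i"
    and "\<beta> (J - 1) - \<beta> 1 \<le> 2 * pi"
  shows "real J \<le> 2 + (\<beta> (J - 1) - \<beta> 1) powr (1/3) * (\<Sum>i=1..J-1. L i) powr (2/3)"
proof -
  obtain n where J: "J = n + 2" using assms(1) by (metis add.commute le_Suc_ex)
  have J1: "J - 1 = Suc n" using J by simp
  define S where "S = (\<Sum>i=1..Suc n. L i)"
  define \<Theta> where "\<Theta> = \<beta> (Suc n) - \<beta> 1"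
  show ?thesis
  proof (cases "n = 0")
    case True
    thus ?thesis using J by simp
  next
    case False
    hence n1: "n \<ge> 1" by simp
    have Lpos: "\<And>i. 1 \<le> i \<Longrightarrow> i \<le> Suc n \<Longrightarrow> L i > 0" using assms(4) J by simp
    have Spos: "S > 0" unfolding S_def using Lpos by (intro sum_pos) auto
    have turn: "\<beta> (Suc i) - \<beta> i \<ge> 1/(L i * L (Suc i))" if "1 \<le> i" "i \<le> n" for i
    proof (rule turn_bound)
      let ?p = "F (Suc i) - F i" and ?q = "F (Suc (Suc i)) - F (Suc i)"
      have lp: "\<And>x y. lattice_pt (x - y) = lattice_pt x - lattice_pt y"
        by (simp add: lattice_pt_def)
      show "lattice_pt ?p = L i *\<^sub>R (cos (\<beta> i), sin (\<beta> i))"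
        unfolding lp using assms(3)[of i] that J by simp
      show "lattice_pt ?q = L (Suc i) *\<^sub>R (cos (\<beta> (Suc i)), sin (\<beta> (Suc i)))"
        unfolding lp using assms(3)[of "Suc i"] that J by simp
      show "L i > 0" "L (Suc i) > 0" using Lpos that by auto
      show "\<beta> i < \<beta> (Suc i)" using assms(5)[of i] that J by simp
    qed
    have tele: "\<Theta> = (\<Sum>i=1..n. \<beta> (Suc i) - \<beta> i)"
      unfolding \<Theta>_def by (subst sum_Suc_diff) auto
    define c where "c = S / real n"
    have cpos: "c > 0" unfolding c_def using Spos n1 by simp
    have "(\<Sum>i=1..n. 3/c^2 - (L i + L (Suc i))/c^3) \<le> (\<Sum>i=1..n. 1/(L i * L (Suc i)))"
      using Lpos cpos by (intro sum_mono tang) auto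
    also have "\<dots> \<le> \<Theta>" unfolding tele using turn by (intro sum_mono) auto
    finally have A: "(\<Sum>i=1..n. 3/c^2 - (L i + L (Suc i))/c^3) \<le> \<Theta>" .
    have Lnn: "\<And>i. i \<in> {1..Suc n} \<Longrightarrow> L i \<ge> 0" using Lpos by (simp add: less_imp_le)
    have s1: "(\<Sum>i=1..n. L i) \<le> S" unfolding S_def using Lnn
      by (intro sum_mono2) auto
    have "(\<Sum>i=1..n. L (Suc i)) = (\<Sum>i=Suc 1..Suc n. L i)"
      by (rule sum.shift_bounds_cl_Suc_ivl[symmetric])
    also have "\<dots> \<le> S" unfolding S_def using Lnn by (intro sum_mono2) auto
    finally have s2: "(\<Sum>i=1..n. L (Suc i)) \<le> S" .
    have "(\<Sum>i=1..n. 3/c^2 - (L i + L (Suc i))/c^3)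
        = 3 * real n / c^2 - ((\<Sum>i=1..n. L i) + (\<Sum>i=1..n. L (Suc i)))/c^3"
      by (simp add: sum_subtractf sum.distrib flip: sum_divide_distrib)
    also have "\<dots> \<ge> 3 * real n / c^2 - 2*S/c^3"
      using s1 s2 cpos by (simp add: divide_right_mono)
    finally have B: "3 * real n / c^2 - 2*S/c^3 \<le> \<Theta>" using A by linarith
    have "3 * real n / c^2 - 2*S/c^3 = real n ^ 3 / S^2"
      unfolding c_def using Spos n1 by (simp add: field_simps power2_eq_square power3_eq_cube)
    hence C: "real n ^ 3 \<le> \<Theta> * S^2" using B Spos by (simp add: divide_le_eq)
    have Th0: "0 \<le> \<Theta>"
    proof -
      have "0 < real n ^ 3" using n1 by simp
      hence "0 < \<Theta> * S^2" using C by linarith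
      thus "0 \<le> \<Theta>" using Spos by (simp add: zero_less_mult_iff)
    qed
    have S23: "(S^2) powr (1/3) = S powr (2/3)"
    proof -
      have "S^2 = S powr 2" using Spos powr_realpow[of S 2] by simp
      hence "(S^2) powr (1/3) = (S powr 2) powr (1/3)" by (simp only:)
      also have "\<dots> = S powr (2 * (1/3))" by (rule powr_powr)
      finally show ?thesis by simp
    qed
    have "real n ^ 3 = real n powr 3" using n1 powr_realpow[of "real n" 3] by simp
    hence "(real n ^ 3) powr (1/3) = (real n powr 3) powr (1/3)" by (simp only:)
    also have "\<dots> = real n powr (3 * (1/3))" by (rule powr_powr)
    also have "\<dots> = real n" by simp
    finally have "(real n ^ 3) powr (1/3) = real n" .
    hence "real n = (real n ^ 3) powr (1/3)" by simp
    also have "\<dots> \<le> (\<Theta> * S^2) powr (1/3)" using C by (intro powr_mono2) auto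
    also have "\<dots> = \<Theta> powr (1/3) * (S^2) powr (1/3)"
      by (rule powr_mult)
    also have "\<dots> = \<Theta> powr (1/3) * S powr (2/3)" using S23 by simp
    finally show ?thesis using J J1 unfolding S_def \<Theta>_def by simp
  qed
qed

end
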